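(* Let $d$ be a positive integer, $q\geq 2$ an integer, and $x\in\mathbb{Z}$. Then $$\liminf_{N\to\infty}\frac{|\{n\in\mathbb{N}: n<N,\ u_q(n)+x\equiv 0\pmod d\}|}{N}\geq\frac{\varphi(d)}{dq}\left\lfloor\frac{q}{d}\right\rfloor,$$ where $\varphi$ is Euler's totient function.
   Context: For an integer $q\geq 2$ and $n\in\mathbb{N}$: $v_q(0)=0$ and, for $n>0$, $v_q(n)=\max\{k: q^k\mid n\}$; $w_q(n)=\sum_{i=0}^n v_q(i)$; $u_q(n)=\sum_{i=0}^n w_q(i)$. *)

theory Defs
  imports "HOL-Analysis.Analysis" "HOL-Number_Theory.Number_Theory"
begin

definition vq :: "nat \<Rightarrow> nat \<Rightarrow> nat" where
  "vq q n = (if n = 0 then 0 else (GREATEST k. q ^ k dvd n))"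

definition wq :: "nat \<Rightarrow> nat \<Rightarrow> nat" where
  "wq q n = (\<Sum>i=0..n. vq q i)"

definition uq :: "nat \<Rightarrow> nat \<Rightarrow> nat" where
  "uq q n = (\<Sum>i=0..n. wq q i)"

end

theory Submission imports Defs begin

lemma vq_props:
  assumes q: "q \<ge> 2" and n: "n > 0"
  shows "q ^ vq q n dvd n" "\<not> q ^ Suc (vq q n) dvd n"
proof -
  have bnd: "\<forall>y. q ^ y dvd n \<longrightarrow> y \<le> n"
  proof (intro allI impI)
    fix y assume "q ^ y dvd n"
    hence "q ^ y \<le> n" using n by (simp add: dvd_imp_le)
    moreover have "y < q ^ y"
    proof -
      have "y < 2 ^ y" by (rule less_exp)
      also have "\<dots> \<le> q ^ y" using q by (simp add: power_mono)
      finally show ?thesis .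
    qed
    ultimately show "y \<le> n" by simp
  qed
  have v: "vq q n = (GREATEST k. q ^ k dvd n)" using n by (simp add: vq_def)
  show "q ^ vq q n dvd n" unfolding v by (rule GreatestI_nat[where k=0 and b=n]) (use bnd in auto)
  show "\<not> q ^ Suc (vq q n) dvd n"
  proof
    assume "q ^ Suc (vq q n) dvd n"
    hence "Suc (vq q n) \<le> (GREATEST k. q ^ k dvd n)" by (rule Greatest_le_nat) (use bnd in auto)
    thus False unfolding v[symmetric] by simp
  qed
qed

lemma vq_eqI:
  assumes q: "q \<ge> 2" and n: "n > 0" and "q ^ k dvd n" "\<not> q ^ Suc k dvd n"
  shows "vq q n = k"
proof -
  have a: "q ^ vq q n dvd n" "\<not> q ^ Suc (vq q n) dvd n" using vq_props[OF q n] by auto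
  have "\<not> k < vq q n"
  proof
    assume "k < vq q n" hence "q ^ Suc k dvd q ^ vq q n" by (metis Suc_leI le_imp_power_dvd)
    with a(1) assms(4) show False using dvd_trans by blast
  qed
  moreover have "\<not> vq q n < k"
  proof
    assume "vq q n < k" hence "q ^ Suc (vq q n) dvd q ^ k" by (metis Suc_leI le_imp_power_dvd)
    with a(2) assms(3) show False using dvd_trans by blast
  qed
  ultimately show ?thesis by simp
qed

lemma vq_shift:
  assumes q: "q \<ge> 2" and i: "0 < i" "i < q ^ J"
  shows "vq q (q ^ J * a + i) = vq q i"
proof -
  let ?k = "vq q i"
  have a: "q ^ ?k dvd i" "\<not> q ^ Suc ?k dvd i" using vq_props[OF q i(1)] by auto
  have "q ^ ?k \<le> i" using a(1) i(1) by (simp add: dvd_imp_le)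
  hence "q ^ ?k < q ^ J" using i(2) by simp
  hence kJ: "?k < J" using q by (simp add: power_less_imp_less_exp)
  have d1: "q ^ ?k dvd q ^ J" "q ^ Suc ?k dvd q ^ J" using kJ by (metis less_imp_le le_imp_power_dvd, metis Suc_leI le_imp_power_dvd)
  show ?thesis
  proof (rule vq_eqI[OF q])
    show "0 < q ^ J * a + i" using i by simp
    show "q ^ ?k dvd q ^ J * a + i" using d1(1) a(1) by simp
    show "\<not> q ^ Suc ?k dvd q ^ J * a + i"
    proof
      assume "q ^ Suc ?k dvd q ^ J * a + i"
      moreover have "q ^ Suc ?k dvd q ^ J * a" using d1(2) by simp
      ultimately have "q ^ Suc ?k dvd i" by (simp add: dvd_add_right_iff)
      with a(2) show False by simp
    qed
  qed
qed

lemma vq_mult_q: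
  assumes q: "q \<ge> 2" and b: "b > 0"
  shows "vq q (q * b) = Suc (vq q b)"
proof -
  have a: "q ^ vq q b dvd b" "\<not> q ^ Suc (vq q b) dvd b" using vq_props[OF q b] by auto
  show ?thesis
  proof (rule vq_eqI[OF q])
    show "0 < q * b" using q b by simp
    show "q ^ Suc (vq q b) dvd q * b" using a(1) by simp
    show "\<not> q ^ Suc (Suc (vq q b)) dvd q * b" using a(2) q by simp
  qed
qed

lemma wq_Suc: "wq q (Suc n) = wq q n + vq q (Suc n)"
  by (simp add: wq_def)

lemma uq_Suc: "uq q (Suc n) = uq q n + wq q (Suc n)"
  by (simp add: uq_def)

lemma wq_block:
  assumes q: "q \<ge> 2" and s: "s < q ^ J"
  shows "wq q (q ^ J * a + s) = wq q (q ^ J * a) + wq q s"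
  using s
proof (induction s)
  case 0 thus ?case by (simp add: wq_def vq_def)
next
  case (Suc s)
  have "vq q (q ^ J * a + Suc s) = vq q (Suc s)" by (rule vq_shift[OF q]) (use Suc in auto)
  thus ?case using Suc by (simp add: wq_Suc)
qed

lemma vq_small:
  assumes q: "q \<ge> 2" and i: "0 < i" "i < q"
  shows "vq q i = 0"
  by (rule vq_eqI[OF q i(1)]) (use i in \<open>auto dest: dvd_imp_le\<close>)

lemma wq_small:
  assumes q: "q \<ge> 2" and s: "s < q"
  shows "wq q s = 0"
  using s
proof (induction s)
  case 0 thus ?case by (simp add: wq_def vq_def)
next
  case (Suc s) thus ?case using vq_small[OF q, of "Suc s"] by (simp add: wq_Suc)
qed

lemma wq_q_mult:
  assumes q: "q \<ge> 2"
  shows "wq q (q * b) = b + wq q b"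
proof (induction b)
  case 0 thus ?case by (simp add: wq_def vq_def)
next
  case (Suc b)
  have e: "q * Suc b = Suc (q * b + (q - 1))" using q by (simp add: algebra_simps)
  have "wq q (q * b + (q - 1)) = wq q (q * b) + wq q (q - 1)"
    using wq_block[OF q, of "q - 1" 1 b] q by simp
  also have "wq q (q - 1) = 0" using wq_small[OF q] q by simp
  finally have "wq q (q * Suc b) = wq q (q * b) + vq q (q * Suc b)"
    unfolding e wq_Suc by (simp add: e[symmetric])
  thus ?case using Suc vq_mult_q[OF q, of "Suc b"] by (simp add: wq_Suc)
qed

definition G :: "nat \<Rightarrow> nat \<Rightarrow> nat" where "G q J = (\<Sum>i<J. q ^ i)"

lemma wq_pow_mult:
  assumes q: "q \<ge> 2"
  shows "wq q (q ^ J * a) = a * G q J + wq q a"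
proof (induction J)
  case 0 thus ?case by (simp add: G_def)
next
  case (Suc J)
  have "wq q (q ^ Suc J * a) = wq q (q * (q ^ J * a))" by (simp add: mult.assoc)
  also have "\<dots> = q ^ J * a + wq q (q ^ J * a)" by (rule wq_q_mult[OF q])
  finally show ?case using Suc by (simp add: G_def algebra_simps)
qed

definition T :: "nat \<Rightarrow> nat \<Rightarrow> nat" where "T q m = wq q (q * m)"

lemma T_block:
  assumes q: "q \<ge> 2" and s: "s < q ^ J"
  shows "T q (q ^ J * a + s) = a * G q (Suc J) + wq q a + T q s"
proof -
  have qs: "q * s < q ^ Suc J" using s q by simp
  have e1: "q * (q ^ J * a + s) = q ^ Suc J * a + q * s" by (simp add: algebra_simps)
  have "T q (q ^ J * a + s) = wq q (q ^ Suc J * a + q * s)" unfolding T_def e1 ..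
  also have "\<dots> = wq q (q ^ Suc J * a) + wq q (q * s)" by (rule wq_block[OF q qs])
  also have "\<dots> = a * G q (Suc J) + wq q a + T q s" unfolding wq_pow_mult[OF q] T_def ..
  finally show ?thesis .
qed

lemma uq_block:
  assumes q: "q \<ge> 2" and r: "r < q"
  shows "uq q (q * m + r) = uq q (q * m) + r * T q m"
  using r
proof (induction r)
  case 0 thus ?case by simp
next
  case (Suc r)
  have "wq q (q * m + Suc r) = wq q (q * m)" using wq_block[OF q, of "Suc r" 1 m] Suc.prems wq_small[OF q]
    by simp
  thus ?case using Suc by (simp add: uq_Suc T_def)
qed


lemma card_split:
  fixes M L :: nat
  shows "card {s. s < M * L \<and> P s} = (\<Sum>b<M. card {s. s < L \<and> P (L * b + s)})"
proof (induction M)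
  case 0 thus ?case by simp
next
  case (Suc M)
  have e: "{s. s < Suc M * L \<and> P s} = {s. s < M * L \<and> P s} \<union> (\<lambda>s. L * M + s) ` {s. s < L \<and> P (L * M + s)}"
  proof
    show "{s. s < Suc M * L \<and> P s} \<subseteq> {s. s < M * L \<and> P s} \<union> (\<lambda>s. L * M + s) ` {s. s < L \<and> P (L * M + s)}"
    proof
    fix s assume s: "s \<in> {s. s < Suc M * L \<and> P s}"
    show "s \<in> {s. s < M * L \<and> P s} \<union> (\<lambda>s. L * M + s) ` {s. s < L \<and> P (L * M + s)}"
    proof (cases "s < M * L")
      case True thus ?thesis using s by simp
    next
      case False
      hence "s = L * M + (s - L * M)" "s - L * M < L" using s by (auto simp: algebra_simps)
      thus ?thesis using s by (intro UnI2 image_eqI[of _ _ "s - L * M"]) auto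
    qed
    qed
  qed (auto simp: algebra_simps)
  have "card {s. s < Suc M * L \<and> P s} = card {s. s < M * L \<and> P s} + card ((\<lambda>s. L * M + s) ` {s. s < L \<and> P (L * M + s)})"
    unfolding e by (rule card_Un_disjoint) (auto simp: algebra_simps)
  also have "card ((\<lambda>s. L * M + s) ` {s. s < L \<and> P (L * M + s)}) = card {s. s < L \<and> P (L * M + s)}"
    by (rule card_image) (auto simp: inj_on_def)
  finally show ?case using Suc by simp
qed

context
  fixes q d :: nat
  assumes q: "q \<ge> 2" and d0: "0 < d" and dq: "d \<le> q"
begin

definition Dn :: "nat \<Rightarrow> int \<Rightarrow> nat" where
  "Dn J c = card {s. s < q ^ J \<and> [int (T q s) = c] (mod int d)}"

definition mu :: "nat \<Rightarrow> nat" where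
  "mu J = Min (Dn J ` {0..<int d})"

lemma Dn_cong: "[c = c'] (mod int d) \<Longrightarrow> Dn J c = Dn J c'"
  unfolding Dn_def by (metis (no_types, lifting) cong_sym cong_trans)

lemma mu_le: "mu J \<le> Dn J c"
proof -
  have "Dn J c = Dn J (c mod int d)" by (rule Dn_cong) (simp add: cong_def)
  moreover have "c mod int d \<in> {0..<int d}" using d0 by simp
  ultimately show ?thesis unfolding mu_def by (metis Min_le finite_atLeastLessThan_int finite_imageI image_eqI)
qed

lemma Dn_sum: "(\<Sum>c\<in>{0..<int d}. Dn J c) = q ^ J"
proof -
  have fin: "finite {s. s < q ^ J}" by simp
  have "(\<Sum>c\<in>{0..<int d}. Dn J c) = card (\<Union>c\<in>{0..<int d}. {s. s < q ^ J \<and> [int (T q s) = c] (mod int d)})"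
    unfolding Dn_def
  proof (rule card_UN_disjoint[symmetric])
    show "\<forall>i\<in>{0..<int d}. finite {s. s < q ^ J \<and> [int (T q s) = i] (mod int d)}" by simp
    show "\<forall>i\<in>{0..<int d}. \<forall>j\<in>{0..<int d}. i \<noteq> j \<longrightarrow> {s. s < q ^ J \<and> [int (T q s) = i] (mod int d)} \<inter> {s. s < q ^ J \<and> [int (T q s) = j] (mod int d)} = {}"
      by (auto simp: cong_def)
  qed simp
  also have "(\<Union>c\<in>{0..<int d}. {s. s < q ^ J \<and> [int (T q s) = c] (mod int d)}) = {s. s < q ^ J}"
  proof
    show "(\<Union>c\<in>{0..<int d}. {s. s < q ^ J \<and> [int (T q s) = c] (mod int d)}) \<subseteq> {s. s < q ^ J}" by auto
    show "{s. s < q ^ J} \<subseteq> (\<Union>c\<in>{0..<int d}. {s. s < q ^ J \<and> [int (T q s) = c] (mod int d)})"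
    proof
    fix s assume "s \<in> {s. s < q ^ J}"
    moreover have "int (T q s) mod int d \<in> {0..<int d}" using d0 by simp
    moreover have "[int (T q s) = int (T q s) mod int d] (mod int d)" by (simp add: cong_def)
    ultimately show "s \<in> (\<Union>c\<in>{0..<int d}. {s. s < q ^ J \<and> [int (T q s) = c] (mod int d)})" by blast
    qed
  qed
  finally show ?thesis by simp
qed

lemma X_surj:
  "\<exists>N<q^2. [int (N * G q (Suc J) + wq q N) = r] (mod int d)"
proof -
  define g where "g = int (G q (Suc J))"
  define t where "t = nat (r mod int d)"
  define e where "e = nat ((- int q * r) mod int d)"
  have b1: "r mod int d < int d" "0 \<le> r mod int d" using d0 by simp_all
  have b2: "(- int q * r) mod int d < int d" "0 \<le> (- int q * r) mod int d" using d0 by simp_all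
  have t: "t < q" "int t = r mod int d" using b1 dq unfolding t_def by linarith+
  have e: "e < q" "int e = (- int q * r) mod int d" using b2 dq unfolding e_def by linarith+
  define N where "N = q * t + e"
  have "N < q * t + q" using e by (simp add: N_def)
  also have "\<dots> \<le> q * (q - 1) + q" using t by simp
  also have "\<dots> = q ^ 2" using q by (simp add: power2_eq_square algebra_simps)
  finally have N: "N < q ^ 2" .
  have "wq q (q ^ 1 * t + e) = wq q (q ^ 1 * t) + wq q e" by (rule wq_block[OF q]) (simp add: e)
  hence "wq q N = wq q (q * t)" using wq_small[OF q e(1)] by (simp add: N_def)
  also have "\<dots> = t" using wq_q_mult[OF q, of t] wq_small[OF q t(1)] by simp
  finally have w: "wq q N = t" .
  have "int (N * G q (Suc J) + wq q N) = int e * g + int t * (int q * g + 1)"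
    unfolding w by (simp add: N_def g_def algebra_simps)
  also have "[\<dots> = ((- int q * r) mod int d) * g + (r mod int d) * (int q * g + 1)] (mod int d)"
    using e t by simp
  also have "[((- int q * r) mod int d) * g + (r mod int d) * (int q * g + 1) = (- int q * r) * g + r * (int q * g + 1)] (mod int d)"
    by (intro cong_add cong_mult cong_refl) (simp_all add: cong_def)
  also have "(- int q * r) * g + r * (int q * g + 1) = r" by (simp add: algebra_simps)
  finally show ?thesis using N by blast
qed

lemma Dn_rec: "Dn (J + 2) c = (\<Sum>N<q^2. Dn J (c - int (N * G q (Suc J) + wq q N)))"
proof -
  have "Dn (J + 2) c = card {s. s < q^2 * q ^ J \<and> [int (T q s) = c] (mod int d)}"
    by (simp add: Dn_def power_add power2_eq_square algebra_simps)
  also have "\<dots> = (\<Sum>N<q^2. card {s. s < q ^ J \<and> [int (T q (q ^ J * N + s)) = c] (mod int d)})"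
    by (rule card_split)
  also have "\<dots> = (\<Sum>N<q^2. Dn J (c - int (N * G q (Suc J) + wq q N)))"
  proof (rule sum.cong[OF refl])
    fix N
    have "{s. s < q ^ J \<and> [int (T q (q ^ J * N + s)) = c] (mod int d)} =
          {s. s < q ^ J \<and> [int (T q s) = c - int (N * G q (Suc J) + wq q N)] (mod int d)}"
    proof (intro Collect_cong conj_cong refl)
      fix s assume s: "s < q ^ J"
      have "int (T q (q ^ J * N + s)) = int (N * G q (Suc J) + wq q N) + int (T q s)"
        using T_block[OF q s] by simp
      thus "[int (T q (q ^ J * N + s)) = c] (mod int d) = [int (T q s) = c - int (N * G q (Suc J) + wq q N)] (mod int d)"
        by (simp add: cong_iff_dvd_diff algebra_simps)
    qed
    thus "card {s. s < q ^ J \<and> [int (T q (q ^ J * N + s)) = c] (mod int d)} = Dn J (c - int (N * G q (Suc J) + wq q N))"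
      by (simp add: Dn_def)
  qed
  finally show ?thesis .
qed

lemma sum_lower:
  "(\<Sum>N<q^2. Dn J (c - int (N * G q (Suc J) + wq q N))) \<ge> q ^ J + (q^2 - d) * mu J"
proof -
  define X where "X N = int (N * G q (Suc J) + wq q N)" for N
  define f where "f N = Dn J (c - X N)" for N
  define h where "h r = (SOME N. N < q^2 \<and> [X N = c - r] (mod int d))" for r
  have hr: "h r < q^2 \<and> [X (h r) = c - r] (mod int d)" for r
    unfolding h_def by (rule someI_ex) (use X_surj[of J "c - r"] in \<open>auto simp: X_def\<close>)
  have inj: "inj_on h {0..<int d}"
  proof (rule inj_onI)
    fix r1 r2 assume r: "r1 \<in> {0..<int d}" "r2 \<in> {0..<int d}" "h r1 = h r2"
    have "[c - r1 = c - r2] (mod int d)" using hr[of r1] hr[of r2] r(3) by (metis cong_sym cong_trans)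
    hence "int d dvd (c - r1) - (c - r2)" by (simp add: cong_iff_dvd_diff)
    hence "int d dvd r2 - r1" by simp
    hence "[r2 = r1] (mod int d)" by (simp add: cong_iff_dvd_diff)
    thus "r1 = r2" using r(1,2) by (simp add: cong_def)
  qed
  define S where "S = h ` {0..<int d}"
  have S: "S \<subseteq> {..<q^2}" "card S = d" using hr inj by (auto simp: S_def card_image)
  have "(\<Sum>N<q^2. f N) = (\<Sum>N\<in>{..<q^2} - S. f N) + (\<Sum>N\<in>S. f N)"
    by (rule sum.subset_diff) (use S in auto)
  moreover have "(\<Sum>N\<in>S. f N) = q ^ J"
  proof -
    have "(\<Sum>N\<in>S. f N) = (\<Sum>r\<in>{0..<int d}. f (h r))" unfolding S_def by (rule sum.reindex[OF inj, unfolded comp_def])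
    also have "\<dots> = (\<Sum>r\<in>{0..<int d}. Dn J r)"
    proof (rule sum.cong[OF refl])
      fix r
      have "[c - X (h r) = r] (mod int d)"
      proof -
        have "[c - X (h r) = c - (c - r)] (mod int d)" using hr[of r] by (intro cong_diff cong_refl) auto
        thus ?thesis by simp
      qed
      thus "f (h r) = Dn J r" unfolding f_def by (rule Dn_cong)
    qed
    also have "\<dots> = q ^ J" by (rule Dn_sum)
    finally show ?thesis .
  qed
  moreover have "(\<Sum>N\<in>{..<q^2} - S. f N) \<ge> (q^2 - d) * mu J"
  proof -
    have "card ({..<q^2} - S) = q^2 - d" using S by (simp add: card_Diff_subset finite_subset)
    moreover have "of_nat (card ({..<q^2} - S)) * mu J \<le> (\<Sum>N\<in>{..<q^2} - S. f N)"
      by (rule sum_bounded_below) (simp add: f_def mu_le)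
    ultimately show ?thesis by simp
  qed
  ultimately show ?thesis unfolding f_def X_def by linarith
qed

lemma mu_attained: "\<exists>c. mu J = Dn J c"
proof -
  have "mu J \<in> Dn J ` {0..<int d}" unfolding mu_def by (rule Min_in) (use d0 in auto)
  thus ?thesis by blast
qed

lemma mu_rec: "mu (J + 2) \<ge> q ^ J + (q^2 - d) * mu J"
proof -
  obtain c where "mu (J + 2) = Dn (J + 2) c" using mu_attained by blast
  thus ?thesis using Dn_rec[of J c] sum_lower[of J c] by simp
qed

definition rho :: "nat \<Rightarrow> real" where "rho J = mu J / q ^ J"

lemma rho_nonneg: "rho J \<ge> 0" by (simp add: rho_def)

lemma rho_rec: "rho (J + 2) \<ge> 1 / q^2 + (1 - d / q^2) * rho J"
proof -
  have q2: "d \<le> q^2" using dq by (simp add: power2_eq_square) (metis le_trans le_square)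
  have qp: "(q:: real) > 0" using q by simp
  have "real (mu (J + 2)) \<ge> real (q ^ J) + real (q^2 - d) * real (mu J)" using mu_rec[of J]
    by (metis of_nat_add of_nat_le_iff of_nat_mult)
  hence m: "real (mu (J + 2)) \<ge> real q ^ J + (real q ^ 2 - real d) * real (mu J)" using q2 by (simp add: of_nat_diff)
  have "real (mu (J + 2)) / real q ^ (J + 2) \<ge> (real q ^ J + (real q ^ 2 - real d) * real (mu J)) / real q ^ (J + 2)"
    using qp m by (simp add: divide_right_mono)
  also have "(real q ^ J + (real q ^ 2 - real d) * real (mu J)) / real q ^ (J + 2) = 1 / q^2 + (1 - d / q^2) * (mu J / q ^ J)"
    using qp by (simp add: field_simps power_add power2_eq_square)
  finally show ?thesis by (simp add: rho_def)
qed

lemma rho_conv: "1 / d - rho (2 * i) \<le> (1 - d / q^2) ^ i / d"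
proof (induction i)
  case 0 thus ?case using rho_nonneg[of 0] by simp
next
  case (Suc i)
  have k: "1 - d / q^2 \<ge> (0::real)"
  proof -
    have "d \<le> q^2" using dq by (simp add: power2_eq_square) (metis le_trans le_square)
    hence "real d \<le> q^2" by (metis of_nat_le_iff of_nat_power)
    thus ?thesis using q by (simp add: field_simps)
  qed
  have "1 / d - rho (2 * Suc i) = 1 / d - rho (2 * i + 2)" by simp
  also have "\<dots> \<le> 1 / d - (1 / q^2 + (1 - d / q^2) * rho (2 * i))" using rho_rec[of "2 * i"] by simp
  also have "\<dots> = (1 - d / q^2) * (1 / d - rho (2 * i))" using d0 q by (simp add: field_simps)
  also have "\<dots> \<le> (1 - d / q^2) * ((1 - d / q^2) ^ i / d)" using Suc k by (rule mult_left_mono)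
  finally show ?case by simp
qed

lemma fiber_card:
  "card {s. s < q ^ J \<and> [T q (q ^ J * b + s) = r] (mod d)} = Dn J (int r - int (b * G q (Suc J) + wq q b))"
proof -
  have "{s. s < q ^ J \<and> [T q (q ^ J * b + s) = r] (mod d)} =
        {s. s < q ^ J \<and> [int (T q s) = int r - int (b * G q (Suc J) + wq q b)] (mod int d)}"
  proof (intro Collect_cong conj_cong refl)
    fix s assume s: "s < q ^ J"
    have "int (T q (q ^ J * b + s)) = int (b * G q (Suc J) + wq q b) + int (T q s)"
      using T_block[OF q s] by simp
    hence "[T q (q ^ J * b + s) = r] (mod d) = [int (b * G q (Suc J) + wq q b) + int (T q s) = int r] (mod int d)"
      by (metis cong_int_iff)
    also have "\<dots> = [int (T q s) = int r - int (b * G q (Suc J) + wq q b)] (mod int d)"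
      by (simp add: cong_iff_dvd_diff algebra_simps)
    finally show "[T q (q ^ J * b + s) = r] (mod d) = [int (T q s) = int r - int (b * G q (Suc J) + wq q b)] (mod int d)" .
  qed
  thus ?thesis by (simp add: Dn_def)
qed

lemma m_count:
  "card {m. m < M \<and> coprime (T q m) d} \<ge> (M div q ^ J) * totient d * mu J"
proof -
  define K where "K = M div q ^ J"
  define F where "F r = {m. m < K * q ^ J \<and> [T q m = r] (mod d)}" for r
  have Fcard: "card (F r) \<ge> K * mu J" for r
  proof -
    have "card (F r) = (\<Sum>b<K. card {s. s < q ^ J \<and> [T q (q ^ J * b + s) = r] (mod d)})"
      unfolding F_def by (rule card_split)
    also have "\<dots> = (\<Sum>b<K. Dn J (int r - int (b * G q (Suc J) + wq q b)))"
      by (simp add: fiber_card)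
    also have "\<dots> \<ge> (\<Sum>b<K. mu J)" by (rule sum_mono) (rule mu_le)
    finally show ?thesis by simp
  qed
  have disj: "\<forall>r1\<in>totatives d. \<forall>r2\<in>totatives d. r1 \<noteq> r2 \<longrightarrow> F r1 \<inter> F r2 = {}"
  proof (intro ballI impI)
    fix r1 r2 assume r: "r1 \<in> totatives d" "r2 \<in> totatives d" "r1 \<noteq> r2"
    show "F r1 \<inter> F r2 = {}"
    proof (rule ccontr)
      assume "F r1 \<inter> F r2 \<noteq> {}"
      then obtain m where "[T q m = r1] (mod d)" "[T q m = r2] (mod d)" unfolding F_def by blast
      hence c: "[r1 = r2] (mod d)" by (metis cong_sym cong_trans)
      show False
      proof (cases "d = 1")
        case True thus False using r by simp
      next
        case False
        hence "d > 1" using d0 by simp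
        hence "r1 < d" "r2 < d" using r totatives_less by blast+
        thus False using c r(3) by (simp add: cong_def)
      qed
    qed
  qed
  have "(\<Sum>r\<in>totatives d. card (F r)) = card (\<Union>r\<in>totatives d. F r)"
    by (rule card_UN_disjoint[symmetric]) (use disj in \<open>auto simp: F_def\<close>)
  also have "\<dots> \<le> card {m. m < M \<and> coprime (T q m) d}"
  proof (rule card_mono)
    show "(\<Union>r\<in>totatives d. F r) \<subseteq> {m. m < M \<and> coprime (T q m) d}"
    proof
      fix m assume "m \<in> (\<Union>r\<in>totatives d. F r)"
      then obtain r where r: "r \<in> totatives d" "m < K * q ^ J" "[T q m = r] (mod d)" unfolding F_def by blast
      have "K * q ^ J \<le> M" unfolding K_def by simp
      moreover have "coprime r d" using r(1) by (simp add: in_totatives_iff)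
      hence "coprime (T q m) d" using r(3) by (metis cong_imp_coprime cong_sym)
      ultimately show "m \<in> {m. m < M \<and> coprime (T q m) d}" using r(2) by simp
    qed
  qed simp
  finally have "(\<Sum>r\<in>totatives d. card (F r)) \<le> card {m. m < M \<and> coprime (T q m) d}" .
  moreover have "(\<Sum>r\<in>totatives d. card (F r)) \<ge> (\<Sum>r\<in>totatives d. K * mu J)" by (rule sum_mono) (rule Fcard)
  ultimately show ?thesis by (simp add: K_def totient_def mult.commute mult.left_commute)
qed

end

lemma block_count:
  fixes x :: int
  assumes q: "q \<ge> 2" and d0: "d > 0" and cop: "coprime (T q m) d"
  shows "card {r. r < q \<and> (int (uq q (q * m + r)) + x) mod int d = 0} \<ge> q div d"
proof -
  define U where "U = int (uq q (q * m)) + x"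
  define W where "W = int (T q m)"
  have "coprime W (int d)" using cop by (simp add: W_def)
  then obtain y where y: "[W * y = 1] (mod int d)" using cong_solve_coprime_int by blast
  define r0 where "r0 = nat ((- U * y) mod int d)"
  have r0: "int r0 = (- U * y) mod int d" "r0 < d"
  proof -
    have "0 \<le> (- U * y) mod int d" "(- U * y) mod int d < int d" using d0 by simp_all
    thus "int r0 = (- U * y) mod int d" "r0 < d" unfolding r0_def by linarith+
  qed
  define f where "f i = i * d + r0" for i
  have inj: "inj_on f {..<q div d}" by (rule inj_onI) (use d0 in \<open>simp add: f_def\<close>)
  have sub: "f ` {..<q div d} \<subseteq> {r. r < q \<and> (int (uq q (q * m + r)) + x) mod int d = 0}"
  proof
    fix r assume "r \<in> f ` {..<q div d}"
    then obtain i where i: "i < q div d" "r = f i" by blast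
    have "r < i * d + d" using r0 by (simp add: i f_def)
    also have "i * d + d = Suc i * d" by simp
    also have "\<dots> \<le> (q div d) * d" using i(1) by (intro mult_right_mono) auto
    also have "\<dots> \<le> q" by simp
    finally have rq: "r < q" .
    have "int (uq q (q * m + r)) + x = U + int r * W" using uq_block[OF q rq, of m] by (simp add: U_def W_def)
    also have "int r = int i * int d + int r0" by (simp add: i f_def)
    also have "[U + (int i * int d + int r0) * W = U + (0 + (- U * y)) * W] (mod int d)"
      by (intro cong_add cong_mult cong_refl) (simp_all add: cong_def r0)
    also have "U + (0 + (- U * y)) * W = U * (1 - W * y)" by (simp add: algebra_simps)
    also have "[U * (1 - W * y) = U * (1 - 1)] (mod int d)"
      by (intro cong_mult cong_diff cong_refl y)
    finally have "(int (uq q (q * m + r)) + x) mod int d = 0" by (simp add: cong_def)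
    with rq show "r \<in> {r. r < q \<and> (int (uq q (q * m + r)) + x) mod int d = 0}" by simp
  qed
  have "card {..<q div d} \<le> card {r. r < q \<and> (int (uq q (q * m + r)) + x) mod int d = 0}"
    by (rule card_inj_on_le[OF inj sub]) simp
  thus ?thesis by simp
qed

lemma n_count:
  fixes x :: int
  assumes q: "q \<ge> 2" and d0: "d > 0"
  shows "card {n. n < N \<and> (int (uq q n) + x) mod int d = 0} \<ge> (q div d) * card {m. m < N div q \<and> coprime (T q m) d}"
proof -
  define P where "P n = ((int (uq q n) + x) mod int d = 0)" for n
  have "(q div d) * card {m. m < N div q \<and> coprime (T q m) d} = (\<Sum>m\<in>{m. m < N div q \<and> coprime (T q m) d}. q div d)"
    by simp
  also have "\<dots> \<le> (\<Sum>m\<in>{m. m < N div q \<and> coprime (T q m) d}. card {r. r < q \<and> P (q * m + r)})"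
    by (rule sum_mono) (use block_count[OF q d0] in \<open>auto simp: P_def\<close>)
  also have "\<dots> \<le> (\<Sum>m<N div q. card {r. r < q \<and> P (q * m + r)})"
    by (rule sum_mono2) auto
  also have "\<dots> = card {n. n < N div q * q \<and> P n}" by (rule card_split[symmetric])
  also have "\<dots> \<le> card {n. n < N \<and> P n}"
  proof (rule card_mono)
    have "N div q * q \<le> N" by simp
    thus "{n. n < N div q * q \<and> P n} \<subseteq> {n. n < N \<and> P n}" by (auto intro: less_le_trans)
  qed simp
  finally show ?thesis by (simp add: P_def)
qed

lemma liminf_lower:
  fixes d q :: nat and x :: int
  assumes q: "q \<ge> 2" and d0: "d > 0" and dq: "d \<le> q"
  shows "liminf (\<lambda>N. ereal (real (card {n. n < N \<and> (int (uq q n) + x) mod int d = 0}) / real N))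
           \<ge> ereal (real ((q div d) * totient d * mu q d J) / real (q * q ^ J))"
proof -
  define K0 where "K0 = real ((q div d) * totient d * mu q d J)"
  define L where "L = real (q * q ^ J)"
  have Lp: "L > 0" using q by (simp add: L_def)
  define g where "g N = K0 / L - K0 / real N" for N :: nat
  define f where "f N = real (card {n. n < N \<and> (int (uq q n) + x) mod int d = 0}) / real N" for N
  have ev: "eventually (\<lambda>N. ereal (g N) \<le> ereal (f N)) sequentially"
  proof (rule eventually_sequentiallyI[of 1])
    fix N :: nat assume N: "N \<ge> 1"
    define C where "C = card {n. n < N \<and> (int (uq q n) + x) mod int d = 0}"
    have "C \<ge> (q div d) * card {m. m < N div q \<and> coprime (T q m) d}"
      unfolding C_def by (rule n_count[OF q d0])
    moreover have "card {m. m < N div q \<and> coprime (T q m) d} \<ge> (N div q div q ^ J) * totient d * mu q d J"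
      by (rule m_count[OF q d0 dq])
    ultimately have "C \<ge> (q div d) * ((N div q div q ^ J) * totient d * mu q d J)"
      by (meson le_trans mult_le_mono2)
    hence C1: "real C \<ge> K0 * real (N div (q * q ^ J))"
      unfolding K0_def by (simp add: div_mult2_eq mult_ac) (metis of_nat_le_iff of_nat_mult mult_ac)
    have "real N < (real (N div (q * q ^ J)) + 1) * L"
    proof -
      define P where "P = q * q ^ J"
      have P: "P > 0" using q by (simp add: P_def)
      have e1: "N div P * P + N mod P = N" by simp
      have e2: "N mod P < P" using P by simp
      have "N < N div P * P + P" using e1 e2 by linarith
      hence "N < (N div (q * q ^ J) + 1) * (q * q ^ J)" by (simp add: P_def algebra_simps)
      hence "real N < real ((N div (q * q ^ J) + 1) * (q * q ^ J))" by linarith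
      thus ?thesis by (simp add: L_def algebra_simps)
    qed
    hence "real (N div (q * q ^ J)) \<ge> real N / L - 1" using Lp by (simp add: field_simps)
    moreover have "K0 \<ge> 0" by (simp add: K0_def)
    ultimately have "real C \<ge> K0 * (real N / L - 1)" using C1 by (meson mult_left_mono order_trans)
    hence "real C / real N \<ge> K0 * (real N / L - 1) / real N" using N by (simp add: divide_right_mono)
    also have "K0 * (real N / L - 1) / real N = g N" using N Lp by (simp add: g_def field_simps)
    finally show "ereal (g N) \<le> ereal (f N)" by (simp add: f_def C_def)
  qed
  have lim: "(\<lambda>N. ereal (g N)) \<longlonglongrightarrow> ereal (K0 / L)"
  proof (rule tendsto_ereal)
    have "(\<lambda>N. K0 / L - K0 / real N) \<longlonglongrightarrow> K0 / L - 0"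
      by (intro tendsto_diff tendsto_const lim_const_over_n)
    moreover have "g = (\<lambda>N. K0 / L - K0 / real N)" by (simp add: g_def fun_eq_iff)
    ultimately show "g \<longlonglongrightarrow> K0 / L" by simp
  qed
  have "ereal (K0 / L) = liminf (\<lambda>N. ereal (g N))" by (rule lim_imp_Liminf[symmetric]) (simp, rule lim)
  also have "\<dots> \<le> liminf (\<lambda>N. ereal (f N))" by (rule Liminf_mono[OF ev])
  finally show ?thesis by (simp add: K0_def L_def f_def)
qed

theorem proposition4p1:
  fixes d q :: nat and x :: int
  assumes "d > 0" and "q \<ge> 2"
  shows "liminf (\<lambda>N. ereal (real (card {n. n < N \<and> (int (uq q n) + x) mod int d = 0}) / real N))
           \<ge> ereal (real (totient d) / (real d * real q) * real (q div d))"
proof (cases "d \<le> q")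
  case False
  hence "q div d = 0" by simp
  thus ?thesis by (simp add: Liminf_bounded)
next
  case dq: True
  note q = assms(2) and d0 = assms(1)
  define t where "t = real (totient d) / (real d * real q) * real (q div d)"
  define A where "A = real (q div d) * real (totient d) / real q"
  have tA: "t = A / d" by (simp add: t_def A_def mult_ac)
  have A0: "A \<ge> 0" by (simp add: A_def)
  have A1: "A \<le> 1"
  proof -
    have "(q div d) * totient d \<le> (q div d) * d" by (simp add: totient_le)
    also have "\<dots> \<le> q" by simp
    finally have "real ((q div d) * totient d) \<le> real q" by linarith
    thus ?thesis using q by (simp add: A_def field_simps)
  qed
  define \<kappa> where "\<kappa> = 1 - real d / real q ^ 2"
  have k1: "\<kappa> < 1" using d0 q by (simp add: \<kappa>_def)
  show ?thesis
    unfolding t_def[symmetric]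
  proof (rule ereal_le_epsilon2)
    fix e :: real assume e: "e > 0"
    obtain i where i: "\<kappa> ^ i < e" using real_arch_pow_inv[OF e k1] by blast
    define J where "J = 2 * i"
    have rc: "1 / d - rho q d J \<le> \<kappa> ^ i / d"
      using rho_conv[OF q d0 dq, of i] by (simp add: J_def \<kappa>_def)
    have key: "real ((q div d) * totient d * mu q d J) / real (q * q ^ J) = A * rho q d J"
      unfolding rho_def[OF q d0 dq] A_def by (simp add: field_simps)
    have kpos: "\<kappa> \<ge> 0"
    proof -
      have "d \<le> q^2" using dq by (simp add: power2_eq_square) (metis le_trans le_square)
      hence "real d \<le> real q ^ 2" by (metis of_nat_le_iff of_nat_power)
      thus ?thesis using q by (simp add: \<kappa>_def field_simps)
    qed
    have kd: "\<kappa> ^ i / d \<ge> 0" using kpos by simp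
    have "t - e \<le> A * rho q d J"
    proof -
      have "A * (1 / d - rho q d J) \<le> \<kappa> ^ i / d"
      proof (cases "1 / d - rho q d J \<ge> 0")
        case True
        hence "A * (1 / d - rho q d J) \<le> 1 * (1 / d - rho q d J)" using A1 by (intro mult_right_mono) auto
        thus ?thesis using rc by simp
      next
        case False
        hence "A * (1 / d - rho q d J) \<le> 0" using A0 by (simp add: mult_nonneg_nonpos)
        thus ?thesis using kd by linarith
      qed
      hence "A / d - A * rho q d J \<le> \<kappa> ^ i / d" by (simp add: field_simps)
      moreover have "\<kappa> ^ i / d \<le> \<kappa> ^ i"
        using kpos d0 by (simp add: divide_le_eq mult_le_cancel_left1)
      ultimately show ?thesis using tA i by linarith
    qed
    hence "ereal (t - e) \<le> liminf (\<lambda>N. ereal (real (card {n. n < N \<and> (int (uq q n) + x) mod int d = 0}) / real N))"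
      using liminf_lower[OF q d0 dq, where x=x and J=J] unfolding key by (meson ereal_less_eq(3) order_trans)
    hence "ereal (t - e) + ereal e \<le> liminf (\<lambda>N. ereal (real (card {n. n < N \<and> (int (uq q n) + x) mod int d = 0}) / real N)) + ereal e"
      by (rule add_right_mono)
    thus "ereal t \<le> liminf (\<lambda>N. ereal (real (card {n. n < N \<and> (int (uq q n) + x) mod int d = 0}) / real N)) + ereal e"
      by simp
  qed
qed

end
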